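(* Let $n\ge 1$ and let $G$ be the graph on the $3n+1$ vertices $c, v_{i,1}, v_{i,2}, v_{i,3}$ ($1\le i\le n$) in which two distinct vertices are adjacent except exactly for the pairs $\{c,v_{i,1}\}$, $\{v_{i,1},v_{i,2}\}$, $\{v_{i,2},v_{i,3}\}$ for $1\le i\le n$ (i.e. $G$ is the complement of a star with $n$ branches of $3$ edges each). Then $\tau(G)=3n-1$, while a minimum connecting transition set of $G$ has size exactly $2n$.
   Context: All graphs are finite, simple and undirected. $G[X]$ denotes the subgraph induced by $X\subseteq V(G)$. The complement $\bar G$ has vertex set $V(G)$ and an edge $xy$ ($x\ne y$) iff $xy\notin E(G)$. A co-connected component of $G$ is (the vertex set of) a connected component of $\bar G$. For a graph $G$, $\tau(G)=\sum_{C}(|C|-2)$ if $G[C]$ connected, $(|C|-1)$ otherwise, the sum over co-connected components $C$ with $|C|\ge 2$. A transition of a graph $G$ is an unordered pair $\{ab,bc\}$ of two distinct edges of $G$ sharing the vertex $b$ (so $a\neq c$); it is written $abc$. A walk in $G$ is a sequence $(v_1,\dots,v_k)$ of vertices with $v_iv_{i+1}\in E(G)$ for all $i\le k-1$. For a set $T$ of transitions of $G$, a walk $(v_1,\dots,v_k)$ is $T$-compatible if for every $i\in[1,k-2]$, either $v_i=v_{i+2}$ or $v_iv_{i+1}v_{i+2}\in T$. $T$ is a connecting transition set of $G$ if for all vertices $u,v$ there is a $T$-compatible walk from $u$ to $v$; a minimum one has minimum cardinality. *)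

theory Defs
  imports Main
begin

text \<open>A finite simple graph is given by a vertex set V and an adjacency relation E
  (symmetric, irreflexive, and only between vertices of V).\<close>

definition compl_adj :: "'a set \<Rightarrow> ('a \<Rightarrow> 'a \<Rightarrow> bool) \<Rightarrow> 'a \<Rightarrow> 'a \<Rightarrow> bool" where
  "compl_adj V E x y \<longleftrightarrow> x \<in> V \<and> y \<in> V \<and> x \<noteq> y \<and> \<not> E x y"

definition cocomps :: "'a set \<Rightarrow> ('a \<Rightarrow> 'a \<Rightarrow> bool) \<Rightarrow> 'a set set" where
  "cocomps V E = {{y \<in> V. (compl_adj V E)\<^sup>*\<^sup>* x y} | x. x \<in> V}"

definition induced_connected :: "('a \<Rightarrow> 'a \<Rightarrow> bool) \<Rightarrow> 'a set \<Rightarrow> bool" where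
  "induced_connected E C \<longleftrightarrow>
     (\<forall>x\<in>C. \<forall>y\<in>C. (\<lambda>a b. a \<in> C \<and> b \<in> C \<and> E a b)\<^sup>*\<^sup>* x y)"

definition tau :: "'a set \<Rightarrow> ('a \<Rightarrow> 'a \<Rightarrow> bool) \<Rightarrow> nat" where
  "tau V E = (\<Sum>C \<in> {C \<in> cocomps V E. card C \<ge> 2}.
                 (if induced_connected E C then card C - 2 else card C - 1))"

text \<open>The transition abc = {ab, bc} is encoded as (b, {a, c}); so abc = cba.\<close>
definition transitions :: "'a set \<Rightarrow> ('a \<Rightarrow> 'a \<Rightarrow> bool) \<Rightarrow> ('a \<times> 'a set) set" where
  "transitions V E = {(b, {a, c}) | a b c. a \<in> V \<and> b \<in> V \<and> c \<in> V \<and>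
                        E a b \<and> E b c \<and> a \<noteq> c}"

definition is_walk :: "'a set \<Rightarrow> ('a \<Rightarrow> 'a \<Rightarrow> bool) \<Rightarrow> 'a list \<Rightarrow> bool" where
  "is_walk V E vs \<longleftrightarrow> vs \<noteq> [] \<and> set vs \<subseteq> V \<and>
      (\<forall>i. Suc i < length vs \<longrightarrow> E (vs ! i) (vs ! Suc i))"

definition compatible :: "('a \<times> 'a set) set \<Rightarrow> 'a list \<Rightarrow> bool" where
  "compatible T vs \<longleftrightarrow> (\<forall>i. i + 2 < length vs \<longrightarrow>
      vs ! i = vs ! (i + 2) \<or> (vs ! (i + 1), {vs ! i, vs ! (i + 2)}) \<in> T)"

definition connecting_transition_set ::
  "'a set \<Rightarrow> ('a \<Rightarrow> 'a \<Rightarrow> bool) \<Rightarrow> ('a \<times> 'a set) set \<Rightarrow> bool" where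
  "connecting_transition_set V E T \<longleftrightarrow> T \<subseteq> transitions V E \<and>
     (\<forall>u\<in>V. \<forall>v\<in>V. \<exists>vs. is_walk V E vs \<and> compatible T vs \<and> hd vs = u \<and> last vs = v)"

text \<open>The concrete graph: c = (0,0), v_{i,j} = (i,j), 1 \<le> i \<le> n, 1 \<le> j \<le> 3.\<close>
definition starV :: "nat \<Rightarrow> (nat \<times> nat) set" where
  "starV n = {(0,0)} \<union> {(i,j). 1 \<le> i \<and> i \<le> n \<and> 1 \<le> j \<and> j \<le> 3}"

definition star_edge :: "nat \<times> nat \<Rightarrow> nat \<times> nat \<Rightarrow> bool" where
  "star_edge x y \<longleftrightarrow> (\<exists>i. 1 \<le> i \<and>
      ((x = (0,0) \<and> y = (i,1)) \<or> (x = (i,1) \<and> y = (i,2)) \<or> (x = (i,2) \<and> y = (i,3))))"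

definition starE :: "nat \<Rightarrow> nat \<times> nat \<Rightarrow> nat \<times> nat \<Rightarrow> bool" where
  "starE n x y \<longleftrightarrow> x \<in> starV n \<and> y \<in> starV n \<and> x \<noteq> y \<and>
      \<not> star_edge x y \<and> \<not> star_edge y x"

end

theory Submission
  imports Defs
begin


lemma starE_sym: "starE n x y \<Longrightarrow> starE n y x" by (auto simp: starE_def)
lemma starE_irrefl: "\<not> starE n x x" by (auto simp: starE_def)
lemma starE_V: "starE n x y \<Longrightarrow> x \<in> starV n \<and> y \<in> starV n" by (auto simp: starE_def)
lemma finite_starV: "finite (starV n)"
proof -
  have "starV n \<subseteq> {0..n} \<times> {0..3}" by (auto simp: starV_def)
  then show ?thesis by (rule finite_subset) auto
qed

lemma starV_cases:
  assumes "x \<in> starV n"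
  obtains "x = (0,0)" | i where "1 \<le> i" "i \<le> n" "x = (i,1)" | i where "1 \<le> i" "i \<le> n" "x = (i,2)"
   | i where "1 \<le> i" "i \<le> n" "x = (i,3)"
proof -
  from assms have "x = (0,0) \<or> (\<exists>i j. x = (i,j) \<and> 1 \<le> i \<and> i \<le> n \<and> 1 \<le> j \<and> j \<le> 3)"
    by (auto simp: starV_def)
  then show ?thesis
  proof
    assume "x = (0,0)" then show ?thesis using that by blast
  next
    assume "\<exists>i j. x = (i,j) \<and> 1 \<le> i \<and> i \<le> n \<and> 1 \<le> j \<and> j \<le> 3"
    then obtain i j where h: "x = (i,j)" "1 \<le> i" "i \<le> n" "1 \<le> j" "j \<le> 3" by blast
    then have "j = 1 \<or> j = 2 \<or> j = 3" by auto
    then show ?thesis using that h by blast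
  qed
qed

lemma E_facts:
  assumes "1 \<le> i" "i \<le> n"
  shows "starE n (i,1) (i,3)" "starE n (i,3) (0,0)" "starE n (0,0) (i,2)"
    "starE n (i,3) (i,1)" "starE n (0,0) (i,3)" "starE n (i,2) (0,0)"
  using assms by (auto simp: starE_def starV_def star_edge_def)

lemma card_starV: "card (starV n) = 3 * n + 1"
proof -
  have "starV n = insert (0,0) ({1..n} \<times> {1..3})" by (auto simp: starV_def)
  moreover have "(0,0) \<notin> {1..n} \<times> {1..(3::nat)}" by auto
  ultimately show ?thesis by (simp add: card_cartesian_product)
qed

lemma compl_facts:
  assumes "1 \<le> i" "i \<le> n"
  shows "compl_adj (starV n) (starE n) (0,0) (i,1)" "compl_adj (starV n) (starE n) (i,1) (i,2)"
    "compl_adj (starV n) (starE n) (i,2) (i,3)"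
  using assms unfolding compl_adj_def starE_def star_edge_def starV_def by auto

lemma compl_c:
  assumes "x \<in> starV n"
  shows "(compl_adj (starV n) (starE n))\<^sup>*\<^sup>* (0,0) x"
  using assms
proof (cases rule: starV_cases)
  case 1 then show ?thesis by simp
next
  case (2 i)
  then show ?thesis using compl_facts[OF 2(1,2)] by auto
next
  case (3 i)
  note f = compl_facts[OF 3(1,2)]
  show ?thesis unfolding 3(3) by (rule rtranclp.rtrancl_into_rtrancl[OF r_into_rtranclp[where r="compl_adj (starV n) (starE n)", OF f(1)] f(2)])
next
  case (4 i)
  note f = compl_facts[OF 4(1,2)]
  show ?thesis unfolding 4(3)
    by (rule rtranclp.rtrancl_into_rtrancl[OF rtranclp.rtrancl_into_rtrancl[OF r_into_rtranclp[where r="compl_adj (starV n) (starE n)", OF f(1)] f(2)] f(3)])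
qed

lemma compl_all:
  assumes "x \<in> starV n" "y \<in> starV n"
  shows "(compl_adj (starV n) (starE n))\<^sup>*\<^sup>* x y"
proof -
  have sym: "(compl_adj (starV n) (starE n))\<inverse>\<inverse> = compl_adj (starV n) (starE n)"
    by (auto simp: compl_adj_def starE_def fun_eq_iff)
  have "(compl_adj (starV n) (starE n))\<^sup>*\<^sup>* (0,0) x" using compl_c assms by blast
  then have "((compl_adj (starV n) (starE n))\<inverse>\<inverse>)\<^sup>*\<^sup>* x (0,0)"
    by (simp add: rtranclp_converseI)
  then have "(compl_adj (starV n) (starE n))\<^sup>*\<^sup>* x (0,0)" using sym by simp
  then show ?thesis using compl_c[OF assms(2)] by auto
qed

lemma cocomps_star: "cocomps (starV n) (starE n) = {starV n}"
proof -
  have ne: "(0,0) \<in> starV n" by (simp add: starV_def)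
  have "\<And>x. x \<in> starV n \<Longrightarrow> {y \<in> starV n. (compl_adj (starV n) (starE n))\<^sup>*\<^sup>* x y} = starV n"
    using compl_all by blast
  then have "\<And>x. x \<in> starV n \<Longrightarrow> {y \<in> starV n. (compl_adj (starV n) (starE n))\<^sup>*\<^sup>* x y} = starV n" .
  then show ?thesis unfolding cocomps_def using ne by blast
qed

lemma E_c:
  assumes "x \<in> starV n"
  shows "(starE n)\<^sup>*\<^sup>* x (0,0)"
  using assms
proof (cases rule: starV_cases)
  case 1 then show ?thesis by simp
next
  case (2 i)
  note f = E_facts[OF 2(1,2)]
  show ?thesis unfolding 2(3) by (rule rtranclp.rtrancl_into_rtrancl[OF r_into_rtranclp[where r="starE n", OF f(1)] f(2)])
next
  case (3 i) then show ?thesis using E_facts[of i n] by (simp add: r_into_rtranclp)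
next
  case (4 i) then show ?thesis using E_facts[of i n] by (simp add: r_into_rtranclp)
qed

lemma ind_conn: "induced_connected (starE n) (starV n)"
proof -
  have eq: "(\<lambda>a b. a \<in> starV n \<and> b \<in> starV n \<and> starE n a b) = starE n"
    using starE_V by (auto simp: fun_eq_iff)
  have sym: "(starE n)\<inverse>\<inverse> = starE n" using starE_sym by (auto simp: fun_eq_iff)
  have "\<And>x y. x \<in> starV n \<Longrightarrow> y \<in> starV n \<Longrightarrow> (starE n)\<^sup>*\<^sup>* x y"
  proof -
    fix x y assume xy: "x \<in> starV n" "y \<in> starV n"
    have "(starE n)\<^sup>*\<^sup>* y (0,0)" using E_c xy by blast
    then have "((starE n)\<inverse>\<inverse>)\<^sup>*\<^sup>* (0,0) y" by (simp add: rtranclp_converseI)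
    then have "(starE n)\<^sup>*\<^sup>* (0,0) y" using sym by simp
    then show "(starE n)\<^sup>*\<^sup>* x y" using E_c[OF xy(1)] by auto
  qed
  then show ?thesis unfolding induced_connected_def eq by blast
qed

lemma tau_star: "n \<ge> 1 \<Longrightarrow> tau (starV n) (starE n) = 3 * n - 1"
proof -
  assume n: "n \<ge> 1"
  have "{C \<in> {starV n}. card C \<ge> 2} = {starV n}" using card_starV[of n] n by auto
  then show ?thesis unfolding tau_def cocomps_star using ind_conn card_starV by simp
qed



lemma is_walk_single: "is_walk V E [x] \<longleftrightarrow> x \<in> V" by (auto simp: is_walk_def)

lemma is_walk_CC: "is_walk V E (x # y # vs) \<longleftrightarrow> x \<in> V \<and> E x y \<and> is_walk V E (y # vs)"
proof
  assume h: "is_walk V E (x # y # vs)"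
  have "E ((y # vs) ! i) ((y # vs) ! Suc i)" if "Suc i < length (y # vs)" for i
    using h that unfolding is_walk_def by (metis Suc_less_eq length_Cons nth_Cons_Suc)
  then show "x \<in> V \<and> E x y \<and> is_walk V E (y # vs)" using h unfolding is_walk_def by force
next
  assume h: "x \<in> V \<and> E x y \<and> is_walk V E (y # vs)"
  have "E ((x # y # vs) ! i) ((x # y # vs) ! Suc i)" if "Suc i < length (x # y # vs)" for i
  proof (cases i)
    case 0 then show ?thesis using h by simp
  next
    case (Suc j) then show ?thesis using h that unfolding is_walk_def by auto
  qed
  then show "is_walk V E (x # y # vs)" using h unfolding is_walk_def by auto
qed

lemma compat_short: "compatible T [x]" "compatible T [x, y]" by (auto simp: compatible_def)

lemma compat_CCC: "compatible T (x # y # z # vs) \<longleftrightarrow> (x = z \<or> (y, {x, z}) \<in> T) \<and> compatible T (y # z # vs)"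
proof
  assume h: "compatible T (x # y # z # vs)"
  have "(y # z # vs) ! i = (y # z # vs) ! (i + 2) \<or> ((y # z # vs) ! (i + 1), {(y # z # vs) ! i, (y # z # vs) ! (i + 2)}) \<in> T"
    if "i + 2 < length (y # z # vs)" for i
    using h that unfolding compatible_def
    by (metis (no_types, lifting) Suc_eq_plus1 add_Suc length_Cons nat_add_left_cancel_less nth_Cons_Suc plus_1_eq_Suc)
  then show "(x = z \<or> (y, {x, z}) \<in> T) \<and> compatible T (y # z # vs)"
    using h unfolding compatible_def by force
next
  assume h: "(x = z \<or> (y, {x, z}) \<in> T) \<and> compatible T (y # z # vs)"
  have "(x # y # z # vs) ! i = (x # y # z # vs) ! (i + 2) \<or> ((x # y # z # vs) ! (i + 1), {(x # y # z # vs) ! i, (x # y # z # vs) ! (i + 2)}) \<in> T"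
    if "i + 2 < length (x # y # z # vs)" for i
  proof (cases i)
    case 0 then show ?thesis using h by simp
  next
    case (Suc j) then show ?thesis using h that unfolding compatible_def by auto
  qed
  then show "compatible T (x # y # z # vs)" unfolding compatible_def by blast
qed

definition T0 :: "nat \<Rightarrow> ((nat \<times> nat) \<times> (nat \<times> nat) set) set" where
  "T0 n = (\<lambda>i. ((i,3), {(i,1),(0,0)})) ` {1..n} \<union> (\<lambda>i. ((0,0), {(i,3),(i,2)})) ` {1..n}"

lemma card_T0: "card (T0 n) = 2 * n"
proof -
  have d: "(\<lambda>i. ((i,3::nat), {(i,1::nat),(0::nat,0::nat)})) ` {1..n} \<inter> (\<lambda>i. ((0::nat,0::nat), {(i,3),(i,2::nat)})) ` {1..n} = {}"
    by force
  have i1: "inj_on (\<lambda>i. ((i,3::nat), {(i,1::nat),(0::nat,0::nat)})) {1..n}" by (auto simp: inj_on_def)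
  have i2: "inj_on (\<lambda>i. ((0::nat,0::nat), {(i,3::nat),(i,2::nat)})) {1..n}"
    by (auto simp: inj_on_def doubleton_eq_iff)
  have "card (T0 n) = card ((\<lambda>i. ((i,3::nat), {(i,1::nat),(0::nat,0::nat)})) ` {1..n}) + card ((\<lambda>i. ((0::nat,0::nat), {(i,3),(i,2::nat)})) ` {1..n})"
    unfolding T0_def by (rule card_Un_disjoint[OF _ _ d]) auto
  also have "\<dots> = 2 * n" using card_image[OF i1] card_image[OF i2] by simp
  finally show ?thesis .
qed

lemma trans_intro: "a \<in> V \<Longrightarrow> b \<in> V \<Longrightarrow> c \<in> V \<Longrightarrow> E a b \<Longrightarrow> E b c \<Longrightarrow> a \<noteq> c \<Longrightarrow> (b,{a,c}) \<in> transitions V E"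
  unfolding transitions_def by blast

lemma T0_trans: "T0 n \<subseteq> transitions (starV n) (starE n)"
proof
  fix t assume "t \<in> T0 n"
  then obtain i where i: "1 \<le> i" "i \<le> n" and t: "t = ((i,3), {(i,1),(0,0)}) \<or> t = ((0,0), {(i,3),(i,2)})"
    unfolding T0_def by auto
  note f = E_facts[OF i]
  show "t \<in> transitions (starV n) (starE n)"
    using t
  proof
    assume t1: "t = ((i,3), {(i,1),(0,0)})"
    have "(i,1) \<in> starV n" "(i,3) \<in> starV n" "(0,0) \<in> starV n" using i by (auto simp: starV_def)
    then show ?thesis unfolding t1 using f i by (intro trans_intro) auto
  next
    assume t1: "t = ((0,0), {(i,3),(i,2)})"
    have "(i,2) \<in> starV n" "(i,3) \<in> starV n" "(0,0) \<in> starV n" using i by (auto simp: starV_def)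
    then show ?thesis unfolding t1 using f starE_sym[OF f(3)] i by (intro trans_intro) auto
  qed
qed

lemma T0_conn: "connecting_transition_set (starV n) (starE n) (T0 n)"
  unfolding connecting_transition_set_def
proof (intro conjI T0_trans ballI)
  fix u v assume u: "u \<in> starV n" and v: "v \<in> starV n"
  let ?W = "\<lambda>vs. is_walk (starV n) (starE n) vs \<and> compatible (T0 n) vs \<and> hd vs = u \<and> last vs = v"
  show "\<exists>vs. ?W vs"
  proof (cases "u = v")
    case True
    then show ?thesis using u by (intro exI[of _ "[u]"]) (simp add: is_walk_single compat_short)
  next
    case ne: False
    show ?thesis
    proof (cases "starE n u v")
      case True
      then show ?thesis using u v
        by (intro exI[of _ "[u,v]"]) (simp add: is_walk_single is_walk_CC compat_short)
    next
      case False
      then have "star_edge u v \<or> star_edge v u" using u v ne by (auto simp: starE_def)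
      then obtain i where i1: "1 \<le> i" and
        cs: "(u = (0,0) \<and> v = (i,1)) \<or> (u = (i,1) \<and> v = (i,2)) \<or> (u = (i,2) \<and> v = (i,3)) \<or>
             (v = (0,0) \<and> u = (i,1)) \<or> (v = (i,1) \<and> u = (i,2)) \<or> (v = (i,2) \<and> u = (i,3))"
        unfolding star_edge_def by blast
      have "(i,1) \<in> starV n" using cs u v by (auto simp: starV_def)
      then have i2: "i \<le> n" by (auto simp: starV_def)
      note f = E_facts[OF i1 i2]
      have V: "(0,0) \<in> starV n" "(i,1) \<in> starV n" "(i,2) \<in> starV n" "(i,3) \<in> starV n"
        using i1 i2 by (auto simp: starV_def)
      have t1: "((i,3), {(i,1),(0,0)}) \<in> T0 n" "((i,3), {(0,0),(i,1)}) \<in> T0 n"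
        using i1 i2 unfolding T0_def by (auto simp: insert_commute)
      have t2: "((0,0), {(i,3),(i,2)}) \<in> T0 n" "((0,0), {(i,2),(i,3)}) \<in> T0 n"
        using i1 i2 unfolding T0_def by (auto simp: insert_commute)
      have sy: "starE n (i,2) (0,0)" "starE n (0,0) (i,3)" "starE n (i,3) (i,1)"
        using f by auto
      from cs show ?thesis
      proof (elim disjE conjE)
        assume "u = (0,0)" "v = (i,1)"
        then show ?thesis using f V t1 t2 i1
          by (intro exI[of _ "[(0,0),(i,3),(i,1)]"]) (simp add: is_walk_single is_walk_CC compat_short compat_CCC)
      next
        assume "u = (i,1)" "v = (i,2)"
        then show ?thesis using f V t1 t2 i1
          by (intro exI[of _ "[(i,1),(i,3),(0,0),(i,2)]"]) (simp add: is_walk_single is_walk_CC compat_short compat_CCC)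
      next
        assume "u = (i,2)" "v = (i,3)"
        then show ?thesis using f V t1 t2 i1 sy
          by (intro exI[of _ "[(i,2),(0,0),(i,3)]"]) (simp add: is_walk_single is_walk_CC compat_short compat_CCC)
      next
        assume "v = (0,0)" "u = (i,1)"
        then show ?thesis using f V t1 t2 i1
          by (intro exI[of _ "[(i,1),(i,3),(0,0)]"]) (simp add: is_walk_single is_walk_CC compat_short compat_CCC)
      next
        assume "v = (i,1)" "u = (i,2)"
        then show ?thesis using f V t1 t2 i1 sy
          by (intro exI[of _ "[(i,2),(0,0),(i,3),(i,1)]"]) (simp add: is_walk_single is_walk_CC compat_short compat_CCC)
      next
        assume "v = (i,2)" "u = (i,3)"
        then show ?thesis using f V t1 t2 i1
          by (intro exI[of _ "[(i,3),(0,0),(i,2)]"]) (simp add: is_walk_single is_walk_CC compat_short compat_CCC)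
      qed
    qed
  qed
qed



definition Ed :: "('a \<Rightarrow> 'a \<Rightarrow> bool) \<Rightarrow> 'a set set" where
  "Ed E = {{x,y} | x y. E x y}"

lemma trans_elim:
  assumes "(b, P) \<in> transitions V E"
  obtains x z where "P = {x,z}" "E x b" "E b z" "x \<noteq> z"
  using assms unfolding transitions_def by blast

lemma cl_exists:
  fixes V :: "'a set" and E
  assumes fin: "finite V" and sym: "\<And>x y. E x y \<Longrightarrow> E y x" and inV: "\<And>x y. E x y \<Longrightarrow> x \<in> V \<and> y \<in> V"
    and irr: "\<And>x. \<not> E x x"
  assumes "finite T" "T \<subseteq> transitions V E"
  shows "\<exists>cl. (\<forall>x y. E x y \<longrightarrow> {x,y} \<subseteq> cl {x,y} \<and> cl {x,y} \<subseteq> V \<and> (\<forall>v\<in>cl {x,y}. \<exists>w\<in>cl {x,y}. E v w))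
          \<and> (\<forall>x y z. (y,{x,z}) \<in> T \<longrightarrow> cl {x,y} = cl {y,z})
          \<and> (\<Sum>S\<in>cl ` Ed E. card S - 2) \<le> card T"
  using assms(5,6)
proof (induction T rule: finite_induct)
  case empty
  have "\<forall>S\<in>Ed E. card S - 2 = 0" unfolding Ed_def by (auto simp: card_insert_if)
  then have "(\<Sum>S\<in>id ` Ed E. card S - 2) = 0" by simp
  moreover have "\<forall>x y. E x y \<longrightarrow> {x,y} \<subseteq> id {x,y} \<and> id {x,y} \<subseteq> V \<and> (\<forall>v\<in>id {x,y}. \<exists>w\<in>id {x,y}. E v w)"
    using inV sym by auto
  ultimately show ?case by (intro exI[of _ id]) auto
next
  case (insert t T)
  then obtain cl where P1: "\<forall>x y. E x y \<longrightarrow> {x,y} \<subseteq> cl {x,y} \<and> cl {x,y} \<subseteq> V \<and> (\<forall>v\<in>cl {x,y}. \<exists>w\<in>cl {x,y}. E v w)"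
     and P2: "\<forall>x y z. (y,{x,z}) \<in> T \<longrightarrow> cl {x,y} = cl {y,z}"
     and P3: "(\<Sum>S\<in>cl ` Ed E. card S - 2) \<le> card T" by auto
  obtain y P where tP: "t = (y, P)" by (cases t)
  then obtain x z where t: "t = (y,{x,z})" and exy: "E x y" and eyz: "E y z" and xz: "x \<noteq> z"
    using insert(4) by (auto elim: trans_elim)
  define A where "A = cl {x,y}"
  define B where "B = cl {y,z}"
  have cardT: "card (insert t T) = card T + 1" using insert by simp
  have newt: "cl' {x',y'} = cl' {y',z'}" if "cl' {x,y} = cl' {y,z}" "(y',{x',z'}) = t" for cl' x' y' z'
  proof -
    from that(2) t have yy: "y' = y" and "{x',z'} = {x,z}" by auto
    then have "(x' = x \<and> z' = z) \<or> (x' = z \<and> z' = x)" by (auto simp: doubleton_eq_iff)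
    then show ?thesis using that(1) yy by (auto simp: insert_commute)
  qed
  show ?case
  proof (cases "A = B")
    case True
    show ?thesis
    proof (intro exI[of _ cl] conjI)
      show "\<forall>x y. E x y \<longrightarrow> {x,y} \<subseteq> cl {x,y} \<and> cl {x,y} \<subseteq> V \<and> (\<forall>v\<in>cl {x,y}. \<exists>w\<in>cl {x,y}. E v w)"
        using P1 .
      show "\<forall>x' y' z'. (y',{x',z'}) \<in> insert t T \<longrightarrow> cl {x',y'} = cl {y',z'}"
        using P2 newt[of cl] True unfolding A_def B_def by blast
      show "(\<Sum>S\<in>cl ` Ed E. card S - 2) \<le> card (insert t T)" using P3 cardT by simp
    qed
  next
    case False
    define cl' where "cl' = (\<lambda>e. if cl e = A \<or> cl e = B then A \<union> B else cl e)"
    have finEd: "finite (Ed E)"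
    proof -
      have "Ed E \<subseteq> Pow V" unfolding Ed_def using inV by auto
      then show ?thesis using fin by (meson finite_Pow_iff finite_subset)
    qed
    have AE: "A \<in> cl ` Ed E" unfolding A_def Ed_def using exy by blast
    have BE: "B \<in> cl ` Ed E" unfolding B_def Ed_def using eyz by blast
    have Asub: "{x,y} \<subseteq> A" "A \<subseteq> V" using P1 exy unfolding A_def by auto
    have Bsub: "{y,z} \<subseteq> B" "B \<subseteq> V" using P1 eyz unfolding B_def by auto
    have finA: "finite A" "finite B" using Asub Bsub fin finite_subset by auto
    have xy: "x \<noteq> y" using exy irr by auto
    have yz: "y \<noteq> z" using eyz irr by auto
    have cA: "card A \<ge> 2"
    proof -
      have "card {x,y} = 2" using xy by simp
      then show ?thesis using card_mono[OF finA(1) Asub(1)] by simp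
    qed
    have cB: "card B \<ge> 2"
    proof -
      have "card {y,z} = 2" using yz by simp
      then show ?thesis using card_mono[OF finA(2) Bsub(1)] by simp
    qed
    have cI: "card (A \<inter> B) \<ge> 1"
    proof -
      have "y \<in> A \<inter> B" using Asub Bsub by auto
      then have "A \<inter> B \<noteq> {}" by blast
      then show ?thesis using finA by (simp add: Suc_le_eq card_gt_0_iff)
    qed
    have cU: "card (A \<union> B) + card (A \<inter> B) = card A + card B" using card_Un_Int[OF finA] by simp
    let ?f = "\<lambda>S. card S - 2"
    let ?R = "cl ` Ed E - {A,B}"
    have s1: "sum ?f (cl ` Ed E) = ?f A + (?f B + sum ?f ?R)"
    proof -
      have "sum ?f (cl ` Ed E) = ?f A + sum ?f (cl ` Ed E - {A})"
        using sum.remove[OF finite_imageI[OF finEd] AE] by simp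
      also have "sum ?f (cl ` Ed E - {A}) = ?f B + sum ?f (cl ` Ed E - {A} - {B})"
        using sum.remove[of "cl ` Ed E - {A}" B] finEd BE False by auto
      also have "cl ` Ed E - {A} - {B} = ?R" by auto
      finally show ?thesis .
    qed
    have sub: "cl' ` Ed E \<subseteq> insert (A \<union> B) ?R" unfolding cl'_def by auto
    have finR: "finite (insert (A \<union> B) ?R)" using finEd by auto
    have s2: "sum ?f (cl' ` Ed E) \<le> ?f (A \<union> B) + sum ?f ?R"
    proof -
      have "sum ?f (cl' ` Ed E) \<le> sum ?f (insert (A \<union> B) ?R)"
        by (rule sum_mono2[OF finR sub]) auto
      also have "\<dots> \<le> ?f (A \<union> B) + sum ?f ?R"
        using finEd by (simp add: sum.insert_if)
      finally show ?thesis .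
    qed
    have s3: "?f (A \<union> B) \<le> ?f A + ?f B + 1" using cA cB cI cU by linarith
    show ?thesis
    proof (intro exI[of _ cl'] conjI allI impI)
      fix x' y' assume e: "E x' y'"
      have h: "{x',y'} \<subseteq> cl {x',y'}" "cl {x',y'} \<subseteq> V" "\<forall>v\<in>cl {x',y'}. \<exists>w\<in>cl {x',y'}. E v w"
        using P1 e by auto
      have hA: "\<forall>v\<in>A. \<exists>w\<in>A. E v w" "\<forall>v\<in>B. \<exists>w\<in>B. E v w" using P1 exy eyz unfolding A_def B_def by auto
      show "{x',y'} \<subseteq> cl' {x',y'}" using h unfolding cl'_def by auto
      show "cl' {x',y'} \<subseteq> V" using h Asub Bsub unfolding cl'_def by auto
      show "\<forall>v\<in>cl' {x',y'}. \<exists>w\<in>cl' {x',y'}. E v w"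
      proof (cases "cl {x',y'} = A \<or> cl {x',y'} = B")
        case True
        have "\<forall>v\<in>A \<union> B. \<exists>w\<in>A \<union> B. E v w" using hA by blast
        then show ?thesis using True unfolding cl'_def by simp
      next
        case False then show ?thesis using h unfolding cl'_def by simp
      qed
    next
      fix x' y' z' assume m: "(y',{x',z'}) \<in> insert t T"
      have c: "cl' {x,y} = cl' {y,z}" unfolding cl'_def A_def B_def by simp
      show "cl' {x',y'} = cl' {y',z'}"
      proof (cases "(y',{x',z'}) = t")
        case True then show ?thesis using newt[OF c] by blast
      next
        case False
        then have "(y',{x',z'}) \<in> T" using m by auto
        then have "cl {x',y'} = cl {y',z'}" using P2 by blast
        then show ?thesis unfolding cl'_def by simp
      qed
    next
      show "(\<Sum>S\<in>cl' ` Ed E. card S - 2) \<le> card (insert t T)"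
        using s1 s2 s3 P3 cardT by linarith
    qed
  qed
qed

lemma walk_cl:
  assumes P2: "\<forall>x y z. (y,{x,z}) \<in> T \<longrightarrow> cl {x,y} = cl {y,z}" and c: "compatible T vs"
  shows "Suc k < length vs \<Longrightarrow> cl {vs!k, vs!Suc k} = cl {vs!0, vs!1}"
proof (induction k)
  case 0 then show ?case by simp
next
  case (Suc k)
  then have IH: "cl {vs!k, vs!Suc k} = cl {vs!0, vs!1}" by simp
  have "k + 2 < length vs" using Suc by simp
  then have "vs ! k = vs ! (k + 2) \<or> (vs ! (k + 1), {vs ! k, vs ! (k + 2)}) \<in> T"
    using c unfolding compatible_def by blast
  then show ?case
  proof
    assume "vs ! k = vs ! (k + 2)"
    then have "{vs ! Suc k, vs ! Suc (Suc k)} = {vs!k, vs!Suc k}"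
      by (simp add: insert_commute)
    then show ?thesis using IH by simp
  next
    assume "(vs ! (k + 1), {vs ! k, vs ! (k + 2)}) \<in> T"
    then have "cl {vs ! k, vs ! (k+1)} = cl {vs ! (k+1), vs ! (k + 2)}" using P2 by blast
    then show ?thesis using IH by simp
  qed
qed



definition CC :: "nat \<Rightarrow> (nat \<times> nat) set" where "CC n = {1..n} \<times> {1..3}"
definition par :: "nat \<times> nat \<Rightarrow> nat \<times> nat" where
  "par x = (if snd x = 1 then (0,0) else (fst x, snd x - 1))"

lemma par_facts:
  assumes "x \<in> CC n"
  shows "x \<in> starV n" "par x \<in> starV n" "par x \<noteq> x" "snd (par x) < snd x"
    "\<not> starE n x (par x)" "\<not> starE n (par x) x"
proof -
  obtain i j where x: "x = (i,j)" "1 \<le> i" "i \<le> n" "1 \<le> j" "j \<le> 3" using assms unfolding CC_def by auto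
  then have j: "j = 1 \<or> j = 2 \<or> j = 3" by auto
  show "x \<in> starV n" using x by (auto simp: starV_def)
  show "par x \<in> starV n" using x j by (auto simp: starV_def par_def)
  show "snd (par x) < snd x" using x j by (auto simp: par_def)
  then show "par x \<noteq> x" by auto
  have "star_edge (par x) x" using x j unfolding par_def star_edge_def by auto
  then show "\<not> starE n x (par x)" "\<not> starE n (par x) x" unfolding starE_def by auto
qed

lemma three:
  assumes "finite S" "card S = 3" "w \<in> S" "a \<in> S" "b \<in> S" "w \<noteq> a" "w \<noteq> b" "a \<noteq> b"
    "\<not> starE n w a" "\<not> starE n w b" "\<forall>v\<in>S. \<exists>u\<in>S. starE n v u"
  shows False
proof -
  obtain u where u: "u \<in> S" "starE n w u" using assms(3,11) by blast
  have uw: "u \<noteq> w" using u(2) starE_irrefl[of n w] by blast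
  have ua: "u \<noteq> a" using u(2) assms(9) by blast
  have ub: "u \<noteq> b" using u(2) assms(10) by blast
  have "card {w,a,b,u} = 4" using uw ua ub assms(6,7,8) by simp
  moreover have "{w,a,b,u} \<subseteq> S" using assms(3,4,5) u(1) by blast
  ultimately have "4 \<le> card S" using card_mono[OF assms(1)] by metis
  then show False using assms(2) by simp
qed

lemma key:
  assumes S: "S \<subseteq> starV n" "S \<noteq> {}" "\<forall>v\<in>S. \<exists>w\<in>S. starE n v w"
  shows "2 * card {x \<in> CC n. x \<in> S \<and> par x \<in> S} \<le> 3 * (card S - 2)"
proof -
  define Q where "Q = {x \<in> CC n. x \<in> S \<and> par x \<in> S}"
  have Qm: "x \<in> CC n" "x \<in> S" "par x \<in> S" if "x \<in> Q" for x using that unfolding Q_def by auto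
  have finS: "finite S" using S(1) finite_starV finite_subset by blast
  have QS: "Q \<subseteq> S" using Qm by blast
  have finQ: "finite Q" using finite_subset[OF QS finS] .
  have c2: "card S \<ge> 2"
  proof -
    obtain v where v: "v \<in> S" using S(2) by blast
    then obtain w where w: "w \<in> S" "starE n v w" using S(3) by blast
    have vw: "v \<noteq> w" using w(2) starE_irrefl[of n v] by blast
    have sub: "{v,w} \<subseteq> S" using v w by blast
    have "card {v,w} = 2" using vw by simp
    then show ?thesis using card_mono[OF finS sub] by simp
  qed
  have qa: "card Q \<le> card S - 1"
  proof -
    define m where "m = Min (snd ` S)"
    have "m \<in> snd ` S" unfolding m_def using finS S(2) by simp
    then obtain x0 where x0: "x0 \<in> S" "snd x0 = m" by blast
    have mn: "snd x0 \<le> snd y" if "y \<in> S" for y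
      using x0(2) finS that unfolding m_def by simp
    have "Q \<subseteq> S - {x0}"
    proof
      fix x assume xq: "x \<in> Q"
      have "x \<noteq> x0"
      proof
        assume e: "x = x0"
        have "snd (par x) < snd x" using par_facts(4)[OF Qm(1)[OF xq]] .
        moreover have "snd x0 \<le> snd (par x)" using mn[OF Qm(3)[OF xq]] .
        ultimately show False using e by simp
      qed
      then show "x \<in> S - {x0}" using Qm(2)[OF xq] by blast
    qed
    then have "card Q \<le> card (S - {x0})" using card_mono finS by blast
    then show ?thesis using x0(1) finS by simp
  qed
  have q2: "card Q = 0" if cs: "card S = 2"
  proof (rule ccontr)
    assume "card Q \<noteq> 0"
    then have "Q \<noteq> {}" by (metis card.empty)
    then obtain x where xq: "x \<in> Q" by blast
    have xc: "x \<in> CC n" using Qm(1)[OF xq] .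
    have sub: "{x, par x} \<subseteq> S" using Qm(2,3)[OF xq] by blast
    have "par x \<noteq> x" using par_facts(3)[OF xc] .
    then have "card {x, par x} = 2" by simp
    then have Seq: "S = {x, par x}" using card_subset_eq[OF finS sub] cs by simp
    obtain w where w: "w \<in> S" "starE n x w" using S(3) Qm(2)[OF xq] by blast
    from w(1) Seq have "w = x \<or> w = par x" by blast
    then show False using w(2) par_facts(5)[OF xc] starE_irrefl[of n x] by blast
  qed
  have q3: "card Q \<le> 1" if cs: "card S = 3"
  proof (rule ccontr)
    assume nq: "\<not> card Q \<le> 1"
    have "\<not> (\<forall>a1\<in>Q. \<forall>a2\<in>Q. a1 = a2)" using nq card_le_Suc0_iff_eq[OF finQ] by simp
    then obtain x1 x2 where x1: "x1 \<in> Q" and x2: "x2 \<in> Q" "x2 \<noteq> x1" by blast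
    have xc1: "x1 \<in> CC n" using Qm(1)[OF x1] .
    have xc2: "x2 \<in> CC n" using Qm(1)[OF x2(1)] .
    note f1 = par_facts[OF xc1] and f2 = par_facts[OF xc2]
    define p1 where "p1 = par x1"
    define p2 where "p2 = par x2"
    have h: "x1 \<in> S" "x2 \<in> S" "p1 \<in> S" "p2 \<in> S" "p1 \<noteq> x1" "p2 \<noteq> x2"
       "snd p1 < snd x1" "snd p2 < snd x2" "\<not> starE n x1 p1" "\<not> starE n p1 x1"
       "\<not> starE n x2 p2" "\<not> starE n p2 x2"
      using Qm[OF x1] Qm[OF x2(1)] f1 f2 unfolding p1_def p2_def by simp_all
    have x12: "x1 \<noteq> x2" using x2(2) by blast
    show False
    proof (cases "p1 = p2")
      case True
      have a1: "p1 \<noteq> x1" using h(5) by blast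
      have a2: "p1 \<noteq> x2" using h(6) True by blast
      have a3: "\<not> starE n p1 x2" using h(12) True by blast
      show False by (rule three[OF finS cs h(3) h(1) h(2) a1 a2 x12 h(10) a3 S(3)])
    next
      case ne12: False
      show False
      proof (cases "p1 = x2")
        case True
        have b1: "x1 \<noteq> p2" using True h(7,8) by auto
        have b2: "x2 \<noteq> x1" using x12 by blast
        have b3: "\<not> starE n x2 x1" using h(10) True by blast
        show False by (rule three[OF finS cs h(2) h(1) h(4) b2 h(6)[symmetric] b1 b3 h(11) S(3)])
      next
        case ne2: False
        show False
        proof (cases "x1 = p2")
          case True
          have c1: "p1 \<noteq> x2" using ne2 by blast
          have c2: "x1 \<noteq> p1" using h(5) by blast
          have c3: "\<not> starE n x1 x2" using h(12) True by blast
          show False by (rule three[OF finS cs h(1) h(3) h(2) c2 x12 c1 h(9) c3 S(3)])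
        next
          case False
          have "card {x1,p1,x2,p2} = 4" using False ne2 ne12 h(5,6) x12 by auto
          moreover have "{x1,p1,x2,p2} \<subseteq> S" using h(1-4) by blast
          ultimately have "4 \<le> card S" using card_mono[OF finS] by metis
          then show False using cs by simp
        qed
      qed
    qed
  qed
  have "2 * card Q \<le> 3 * (card S - 2)"
  proof (cases "card S = 2")
    case True then show ?thesis using q2 by simp
  next
    case False
    show ?thesis
    proof (cases "card S = 3")
      case True then show ?thesis using q3 by simp
    next
      case False
      then show ?thesis using qa c2 \<open>card S \<noteq> 2\<close> by linarith
    qed
  qed
  then show ?thesis unfolding Q_def .
qed



lemma lower:
  assumes ct: "connecting_transition_set (starV n) (starE n) T"
  shows "2 * n \<le> card T"
proof -
  have Tsub: "T \<subseteq> transitions (starV n) (starE n)" using ct unfolding connecting_transition_set_def by blast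
  have "transitions (starV n) (starE n) \<subseteq> starV n \<times> Pow (starV n)"
    unfolding transitions_def by auto
  moreover have "finite (starV n \<times> Pow (starV n))" using finite_starV by simp
  ultimately have finT: "finite T" using Tsub finite_subset by metis
  obtain cl where P1: "\<forall>x y. starE n x y \<longrightarrow> {x,y} \<subseteq> cl {x,y} \<and> cl {x,y} \<subseteq> starV n \<and> (\<forall>v\<in>cl {x,y}. \<exists>w\<in>cl {x,y}. starE n v w)"
    and P2: "\<forall>x y z. (y,{x,z}) \<in> T \<longrightarrow> cl {x,y} = cl {y,z}"
    and P3: "(\<Sum>S\<in>cl ` Ed (starE n). card S - 2) \<le> card T"
    using cl_exists[of "starV n" "starE n" T, OF finite_starV starE_sym starE_V starE_irrefl finT Tsub] by blast
  define F where "F = cl ` Ed (starE n)"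
  define Q where "Q = (\<lambda>S. {x \<in> CC n. x \<in> S \<and> par x \<in> S})"
  have finEd: "finite (Ed (starE n))"
  proof -
    have "Ed (starE n) \<subseteq> Pow (starV n)" unfolding Ed_def using starE_V by blast
    then show ?thesis using finite_starV by (meson finite_Pow_iff finite_subset)
  qed
  have finF: "finite F" unfolding F_def using finEd by simp
  have cover: "\<exists>S\<in>F. x \<in> Q S" if xc: "x \<in> CC n" for x
  proof -
    note pf = par_facts[OF xc]
    obtain vs where w: "is_walk (starV n) (starE n) vs" "compatible T vs" "hd vs = x" "last vs = par x"
      using ct pf(1,2) unfolding connecting_transition_set_def by blast
    have ne: "vs \<noteq> []" using w(1) unfolding is_walk_def by blast
    have L2: "length vs \<ge> 2"
    proof (rule ccontr)
      assume "\<not> length vs \<ge> 2"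
      moreover have "length vs > 0" using ne by simp
      ultimately have "length vs = 1" by linarith
      then have "hd vs = last vs" by (cases vs) auto
      then show False using w(3,4) pf(3) by simp
    qed
    have e0: "starE n (vs!0) (vs!Suc 0)" using w(1) L2 unfolding is_walk_def by auto
    define k where "k = length vs - 2"
    have k: "Suc k < length vs" "Suc k = length vs - 1" using L2 unfolding k_def by auto
    have ek: "starE n (vs!k) (vs!Suc k)" using w(1) k(1) unfolding is_walk_def by blast
    have same: "cl {vs!k, vs!Suc k} = cl {vs!0, vs!1}" using walk_cl[OF P2 w(2) k(1)] .
    define S where "S = cl {vs!0, vs!Suc 0}"
    have SF: "S \<in> F" unfolding S_def F_def Ed_def using e0 by blast
    have "x = vs!0" using w(3) ne by (simp add: hd_conv_nth)
    then have xS: "x \<in> S" using P1 e0 unfolding S_def by blast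
    have "par x = vs!Suc k" using w(4) ne k(2) by (simp add: last_conv_nth)
    moreover have "vs!Suc k \<in> cl {vs!k, vs!Suc k}" using P1 ek by blast
    ultimately have pS: "par x \<in> S" using same unfolding S_def by simp
    show ?thesis using SF xS pS xc unfolding Q_def by blast
  qed
  have keyF: "2 * card (Q S) \<le> 3 * (card S - 2)" if SF: "S \<in> F" for S
  proof -
    obtain e where e: "e \<in> Ed (starE n)" "S = cl e" using SF unfolding F_def by blast
    then obtain a b where ab: "e = {a,b}" "starE n a b" unfolding Ed_def by blast
    have hh: "{a,b} \<subseteq> cl {a,b} \<and> cl {a,b} \<subseteq> starV n \<and> (\<forall>v\<in>cl {a,b}. \<exists>w\<in>cl {a,b}. starE n v w)"
      using P1 ab(2) by blast
    have Se: "S = cl {a,b}" using e(2) ab(1) by simp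
    have h: "{a,b} \<subseteq> S" "S \<subseteq> starV n" "\<forall>v\<in>S. \<exists>w\<in>S. starE n v w" using hh unfolding Se by blast+
    have "S \<noteq> {}" using h(1) by blast
    then show ?thesis using key[OF h(2) _ h(3)] unfolding Q_def by blast
  qed
  have "CC n \<subseteq> (\<Union>S\<in>F. Q S)" using cover by blast
  moreover have "finite (\<Union>S\<in>F. Q S)" using finF unfolding Q_def CC_def by auto
  ultimately have "card (CC n) \<le> card (\<Union>S\<in>F. Q S)" by (rule card_mono[rotated])
  also have "\<dots> \<le> (\<Sum>S\<in>F. card (Q S))" by (rule card_UN_le[OF finF])
  finally have c1: "card (CC n) \<le> (\<Sum>S\<in>F. card (Q S))" .
  have "2 * (\<Sum>S\<in>F. card (Q S)) = (\<Sum>S\<in>F. 2 * card (Q S))" by (simp add: sum_distrib_left)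
  also have "\<dots> \<le> (\<Sum>S\<in>F. 3 * (card S - 2))" by (rule sum_mono) (rule keyF)
  also have "\<dots> = 3 * (\<Sum>S\<in>F. card S - 2)" by (simp add: sum_distrib_left)
  also have "\<dots> \<le> 3 * card T" using P3 unfolding F_def by simp
  finally have c2: "2 * (\<Sum>S\<in>F. card (Q S)) \<le> 3 * card T" .
  have "card (CC n) = 3 * n" unfolding CC_def by (simp add: card_cartesian_product)
  then show ?thesis using c1 c2 by linarith
qed

theorem mainTheorem9:
  fixes n :: nat
  assumes "n \<ge> 1"
  shows "tau (starV n) (starE n) = 3 * n - 1 \<and>
         (\<exists>T. connecting_transition_set (starV n) (starE n) T \<and> card T = 2 * n) \<and>
         (\<forall>T. connecting_transition_set (starV n) (starE n) T \<longrightarrow> 2 * n \<le> card T)"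
  using tau_star[OF assms] T0_conn card_T0 lower by blast


end
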